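(* For any class $\mathcal{C}$ of functions $\{\pm1\}^d\to\{\pm1\}$, any $\mathcal{V}\subseteq2^{[d]}$, any $\varepsilon>0$ and any $n,m\in\mathbb{N}$ with $nm\varepsilon\ge2$, $$\delta_{\mathrm{gen}}(\mathcal{C},\mathcal{V},n,m,\varepsilon)\ \le\ 2\,\Pi_{\mathcal{C},\mathcal{V}}(n,2m)\,\exp(-nm\varepsilon/10).$$
   Context: For $f:\{\pm1\}^d\to\{\pm1\}$, $\mathrm{Rel}(f)=\{j\in[d]:\exists v\in\{\pm1\}^d,\ f(v|_{v_j=+1})\neq f(v|_{v_j=-1})\}$, where $v|_{v_j=b}$ is $v$ with coordinate $j$ set to $b$. For distributions $D^{(1)},\dots,D^{(n)}$ over $\{\pm1\}^d\times\{\pm1\}$, $\delta_{\mathrm{gen}}(\mathcal{C},\mathcal{V},n,m,\varepsilon,D^{(1)},\dots,D^{(n)})$ is the probability, over independent samples $S^{(i)}\sim(D^{(i)})^m$, $i\in[n]$, that there exist $h^{(1)},\dots,h^{(n)}\in\mathcal{C}$ with $\bigcup_i\mathrm{Rel}(h^{(i)})\in\mathcal{V}$ such that $\frac{1}{nm}\sum_{i}\sum_{(x,y)\in S^{(i)}}\mathbf{1}[h^{(i)}(x)\neq y]\le\varepsilon$ but $\frac1n\sum_i\Pr_{(x,y)\sim D^{(i)}}[h^{(i)}(x)\neq y]\ge4\varepsilon$. Then $\delta_{\mathrm{gen}}(\mathcal{C},\mathcal{V},n,m,\varepsilon)$ is the supremum over all $D^{(1)},\dots,D^{(n)}$. Multitask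 shattering number: for a sample $S=(x_1,\dots,x_m)$ write $f(S)=(f(x_1),\dots,f(x_m))$; $\Pi_{\mathcal{C},\mathcal{V}}(n,m)$ is the maximum over $S^{(1)},\dots,S^{(n)}\in(\{\pm1\}^d)^m$ of the number of distinct tuples $(f^{(1)}(S^{(1)}),\dots,f^{(n)}(S^{(n)}))$ with $f^{(1)},\dots,f^{(n)}\in\mathcal{C}$ and $\bigcup_i\mathrm{Rel}(f^{(i)})\in\mathcal{V}$. *)

theory Defs
  imports "HOL-Probability.Probability"
begin

(* Points of {+-1}^d are functions 'd => bool on a finite index type 'd (= [d]);
   True encodes +1, False encodes -1. Labels {+-1} are likewise bool. *)

type_synonym 'd point = "'d \<Rightarrow> bool"
type_synonym 'd hyp = "'d point \<Rightarrow> bool"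
type_synonym 'd example = "'d point \<times> bool"

definition Rel :: "('d::finite) hyp \<Rightarrow> 'd set" where
  "Rel f = {j. \<exists>v. f (v(j := True)) \<noteq> f (v(j := False))}"

(* joint distribution of independent samples S^{(i)} ~ (D^{(i)})^m, i < n;
   S i j is the j-th example of the i-th sample *)
definition sample_pmf :: "nat \<Rightarrow> nat \<Rightarrow> (nat \<Rightarrow> ('d::finite) example pmf)
    \<Rightarrow> (nat \<Rightarrow> nat \<Rightarrow> 'd example) pmf" where
  "sample_pmf n m D = Pi_pmf {..<n} (\<lambda>_. undefined) (\<lambda>i. Pi_pmf {..<m} undefined (\<lambda>_. D i))"

definition emp_err :: "nat \<Rightarrow> nat \<Rightarrow> (nat \<Rightarrow> ('d::finite) hyp) \<Rightarrow> (nat \<Rightarrow> nat \<Rightarrow> 'd example) \<Rightarrow> real" where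
  "emp_err n m h S = (1 / (real n * real m)) *
     (\<Sum>i<n. \<Sum>j<m. if h i (fst (S i j)) \<noteq> snd (S i j) then 1 else 0)"

definition true_err :: "nat \<Rightarrow> (nat \<Rightarrow> ('d::finite) example pmf) \<Rightarrow> (nat \<Rightarrow> 'd hyp) \<Rightarrow> real" where
  "true_err n D h = (1 / real n) * (\<Sum>i<n. measure_pmf.prob (D i) {(x, y). h i x \<noteq> y})"

definition bad_event :: "('d::finite) hyp set \<Rightarrow> 'd set set \<Rightarrow> nat \<Rightarrow> nat \<Rightarrow> real
    \<Rightarrow> (nat \<Rightarrow> 'd example pmf) \<Rightarrow> (nat \<Rightarrow> nat \<Rightarrow> 'd example) set" where
  "bad_event C V n m \<epsilon> D = {S. \<exists>h. (\<forall>i<n. h i \<in> C) \<and> (\<Union>i<n. Rel (h i)) \<in> V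
        \<and> emp_err n m h S \<le> \<epsilon> \<and> true_err n D h \<ge> 4 * \<epsilon>}"

definition delta_gen_D :: "('d::finite) hyp set \<Rightarrow> 'd set set \<Rightarrow> nat \<Rightarrow> nat \<Rightarrow> real
    \<Rightarrow> (nat \<Rightarrow> 'd example pmf) \<Rightarrow> real" where
  "delta_gen_D C V n m \<epsilon> D = measure_pmf.prob (sample_pmf n m D) (bad_event C V n m \<epsilon> D)"

(* supremum over all D^{(1)},...,D^{(n)} (only D i for i < n matter) *)
definition delta_gen :: "('d::finite) hyp set \<Rightarrow> 'd set set \<Rightarrow> nat \<Rightarrow> nat \<Rightarrow> real \<Rightarrow> real" where
  "delta_gen C V n m \<epsilon> = (SUP D. delta_gen_D C V n m \<epsilon> D)"

definition patterns :: "('d::finite) hyp set \<Rightarrow> 'd set set \<Rightarrow> nat \<Rightarrow> nat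
    \<Rightarrow> (nat \<Rightarrow> nat \<Rightarrow> 'd point) \<Rightarrow> bool list list set" where
  "patterns C V n m S = {map (\<lambda>i. map (\<lambda>j. h i (S i j)) [0..<m]) [0..<n] | h.
        (\<forall>i<n. h i \<in> C) \<and> (\<Union>i<n. Rel (h i)) \<in> V}"

definition shatter :: "('d::finite) hyp set \<Rightarrow> 'd set set \<Rightarrow> nat \<Rightarrow> nat \<Rightarrow> nat" where
  "shatter C V n m = Max {card (patterns C V n m S) | S. True}"

end

theory Submission
  imports Defs
begin


lemma measure_pair_pmf_iter:
  "measure_pmf.prob (pair_pmf M N) A = (\<integral>a. measure_pmf.prob N {b. (a,b) \<in> A} \<partial>M)"
proof -
  have "emeasure (pair_pmf M N) A = (\<integral>\<^sup>+a. emeasure N {b. (a,b) \<in> A} \<partial>M)"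
    unfolding pair_pmf_def emeasure_bind_pmf
    by (intro nn_integral_cong) (simp add: indicator_def emeasure_pmf_single[symmetric]
         nn_integral_indicator[symmetric] vimage_def)
  also have "\<dots> = (\<integral>\<^sup>+a. ennreal (measure_pmf.prob N {b. (a,b) \<in> A}) \<partial>M)"
    by (simp add: measure_pmf.emeasure_eq_measure)
  also have "\<dots> = ennreal (\<integral>a. measure_pmf.prob N {b. (a,b) \<in> A} \<partial>M)"
    by (intro nn_integral_eq_integral measure_pmf.integrable_const_bound[where B=1]) auto
  finally show ?thesis
    by (simp add: measure_pmf.emeasure_eq_measure)
qed

lemma sample_flat:
  fixes D :: "nat \<Rightarrow> ('d::finite) example pmf"
  shows
  "sample_pmf n m D = map_pmf (\<lambda>F i j. F (i,j)) (Pi_pmf ({..<n}\<times>{..<m}) undefined (\<lambda>x. D (fst x)))"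
proof (rule pmf_eqI)
  fix S :: "nat \<Rightarrow> nat \<Rightarrow> ('d::finite) example"
  have inj: "inj (\<lambda>(F::nat\<times>nat \<Rightarrow> 'd example) i j. F (i,j))"
    by (auto simp: inj_on_def fun_eq_iff)
  have S: "S = (\<lambda>F i j. F (i,j)) (\<lambda>x. S (fst x) (snd x))" by simp
  have R: "pmf (map_pmf (\<lambda>F i j. F (i,j)) (Pi_pmf ({..<n}\<times>{..<m}) undefined (\<lambda>x. D (fst x)))) S
     = (if (\<forall>x. x \<notin> {..<n}\<times>{..<m} \<longrightarrow> S (fst x) (snd x) = undefined)
        then \<Prod>x\<in>{..<n}\<times>{..<m}. pmf (D (fst x)) (S (fst x) (snd x)) else 0)"
    apply (subst S)
    apply (subst pmf_map_inj'[OF inj])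
    apply (subst pmf_Pi) by auto
  have L: "pmf (sample_pmf n m D) S = (if (\<forall>i. i \<notin> {..<n} \<longrightarrow> S i = (\<lambda>_. undefined))
      then \<Prod>i\<in>{..<n}. (if (\<forall>j. j \<notin> {..<m} \<longrightarrow> S i j = undefined) then \<Prod>j\<in>{..<m}. pmf (D i) (S i j) else 0)
      else 0)"
    unfolding sample_pmf_def by (simp only: pmf_Pi[OF finite_lessThan])
  show "pmf (sample_pmf n m D) S = pmf (map_pmf (\<lambda>F i j. F (i,j)) (Pi_pmf ({..<n}\<times>{..<m}) undefined (\<lambda>x. D (fst x)))) S"
  proof (cases "\<forall>x. x \<notin> {..<n}\<times>{..<m} \<longrightarrow> S (fst x) (snd x) = undefined")
    case True
    then have c1: "\<forall>i. i \<notin> {..<n} \<longrightarrow> S i = (\<lambda>_. undefined)" by (auto simp: fun_eq_iff)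
    from True have c2: "\<forall>i\<in>{..<n}. \<forall>j. j \<notin> {..<m} \<longrightarrow> S i j = undefined" by auto
    have "pmf (sample_pmf n m D) S = (\<Prod>i\<in>{..<n}. \<Prod>j\<in>{..<m}. pmf (D i) (S i j))"
      unfolding L using c1 c2 by (auto intro!: prod.cong)
    also have "\<dots> = (\<Prod>x\<in>{..<n}\<times>{..<m}. pmf (D (fst x)) (S (fst x) (snd x)))"
      by (simp add: prod.cartesian_product case_prod_unfold)
    finally show ?thesis using R True by simp
  next
    case False
    then obtain i j where ij: "(i,j) \<notin> {..<n}\<times>{..<m}" "S i j \<noteq> undefined" by auto
    show ?thesis
    proof (cases "i < n")
      case True
      with ij have "j \<ge> m" by auto
      then have "(if (\<forall>j. j \<notin> {..<m} \<longrightarrow> S i j = undefined) then \<Prod>j\<in>{..<m}. pmf (D i) (S i j) else 0) = 0"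
        using ij by auto
      note z = this
      have "(\<Prod>i\<in>{..<n}. (if (\<forall>j. j \<notin> {..<m} \<longrightarrow> S i j = undefined) then \<Prod>j\<in>{..<m}. pmf (D i) (S i j) else 0)) = 0"
        apply (rule prod_zero, simp, rule bexI[of _ i]) using z True by auto
      then have "pmf (sample_pmf n m D) S = 0" unfolding L by simp
      then show ?thesis by (simp only: R if_not_P[OF \<open>\<not> (\<forall>x. _)\<close>])
    next
      case False
      then have "pmf (sample_pmf n m D) S = 0" unfolding L using ij
        by (auto simp: fun_eq_iff)
      then show ?thesis by (simp only: R if_not_P[OF \<open>\<not> (\<forall>x. _)\<close>])
    qed
  qed
qed

lemma pmf_pair': "pmf (pair_pmf A B) x = pmf A (fst x) * pmf B (snd x)"
  by (cases x) (simp add: pmf_pair)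

lemma Pi_pmf_pair:
  assumes "finite A"
  shows "Pi_pmf A (d1,d2) (\<lambda>x. pair_pmf (p x) (q x)) =
         map_pmf (\<lambda>(f,g) x. (f x, g x)) (pair_pmf (Pi_pmf A d1 p) (Pi_pmf A d2 q))"
proof (rule pmf_eqI)
  fix h :: "'a \<Rightarrow> 'b \<times> 'c"
  have inj: "inj (\<lambda>(f::'a\<Rightarrow>'b, g::'a\<Rightarrow>'c) x. (f x, g x))"
    by (auto simp: inj_on_def fun_eq_iff)
  have h: "h = (\<lambda>(f,g) x. (f x, g x)) (fst \<circ> h, snd \<circ> h)" by auto
  have "pmf (map_pmf (\<lambda>(f,g) x. (f x, g x)) (pair_pmf (Pi_pmf A d1 p) (Pi_pmf A d2 q))) h
     = pmf (Pi_pmf A d1 p) (fst \<circ> h) * pmf (Pi_pmf A d2 q) (snd \<circ> h)"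
    by (subst h, subst pmf_map_inj'[OF inj]) (simp add: pmf_pair)
  also have "\<dots> = pmf (Pi_pmf A (d1,d2) (\<lambda>x. pair_pmf (p x) (q x))) h"
    using assms by (auto simp: pmf_Pi pmf_pair' prod.distrib prod_eq_iff)
  finally show "pmf (Pi_pmf A (d1,d2) (\<lambda>x. pair_pmf (p x) (q x))) h =
         pmf (map_pmf (\<lambda>(f,g) x. (f x, g x)) (pair_pmf (Pi_pmf A d1 p) (Pi_pmf A d2 q))) h" by simp
qed

lemma map_swap_coord:
  assumes "map_pmf prod.swap M = M"
  shows "map_pmf (\<lambda>(t,b). if b then prod.swap t else t) (pair_pmf M B) = M"
proof -
  have "map_pmf (\<lambda>(t,b). if b then prod.swap t else t) (pair_pmf M B)
       = bind_pmf B (\<lambda>b. map_pmf (\<lambda>t. if b then prod.swap t else t) M)"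
    unfolding pair_pmf_def map_bind_pmf map_return_pmf
    by (subst bind_commute_pmf) (simp add: map_pmf_def)
  also have "\<dots> = bind_pmf B (\<lambda>_. M)"
  proof (intro bind_pmf_cong refl)
    fix b show "map_pmf (\<lambda>t. if b then prod.swap t else t) M = M"
      by (cases b) (simp_all add: assms)
  qed
  also have "\<dots> = M" by simp
  finally show ?thesis .
qed

lemma swap_pair_same: "map_pmf prod.swap (pair_pmf M M) = pair_pmf M M"
proof -
  have sw: "prod.swap = (\<lambda>(x,y). (y,x))" by auto
  show ?thesis using pair_commute_pmf[of M M] by (simp add: sw)
qed

lemma swap_invariant:
  assumes "finite A"
  shows "map_pmf (\<lambda>(T,\<sigma>) x. if \<sigma> x then prod.swap (T x) else T x)
           (pair_pmf (Pi_pmf A (d,d) (\<lambda>x. pair_pmf (p x) (p x))) (Pi_pmf A False (\<lambda>_. bernoulli_pmf (1/2))))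
         = Pi_pmf A (d,d) (\<lambda>x. pair_pmf (p x) (p x))"
proof -
  let ?g = "\<lambda>(t,b). if b then prod.swap t else t"
  have "(\<lambda>(T,\<sigma>) x. if \<sigma> x then prod.swap (T x) else T x) = (\<lambda>h. ?g \<circ> h) \<circ> (\<lambda>(f,g) x. (f x, g x))"
    by (auto simp: fun_eq_iff)
  note eqF = this
  note eqZ = Pi_pmf_pair[of A "(d,d)" False "\<lambda>x. pair_pmf (p x) (p x)" "\<lambda>_. bernoulli_pmf (1/2)", OF assms, symmetric]
  have "map_pmf (\<lambda>(T,\<sigma>) x. if \<sigma> x then prod.swap (T x) else T x)
           (pair_pmf (Pi_pmf A (d,d) (\<lambda>x. pair_pmf (p x) (p x))) (Pi_pmf A False (\<lambda>_. bernoulli_pmf (1/2))))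
      = map_pmf (\<lambda>h. ?g \<circ> h) (Pi_pmf A ((d,d),False) (\<lambda>x. pair_pmf (pair_pmf (p x) (p x)) (bernoulli_pmf (1/2))))"
    by (simp only: eqF eqZ pmf.map_comp[symmetric])
  also have "\<dots> = Pi_pmf A (d,d) (\<lambda>x. map_pmf ?g (pair_pmf (pair_pmf (p x) (p x)) (bernoulli_pmf (1/2))))"
    by (rule Pi_pmf_map[symmetric]) (use assms in auto)
  also have "\<dots> = Pi_pmf A (d,d) (\<lambda>x. pair_pmf (p x) (p x))"
    by (intro Pi_pmf_cong refl map_swap_coord swap_pair_same)
  finally show ?thesis .
qed



lemma prob_le_expectation:
  fixes g :: "'a \<Rightarrow> real"
  assumes "finite (set_pmf M)" "\<And>x. x \<in> set_pmf M \<Longrightarrow> x \<in> A \<Longrightarrow> 1 \<le> g x"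
    "\<And>x. x \<in> set_pmf M \<Longrightarrow> 0 \<le> g x"
  shows "measure_pmf.prob M A \<le> measure_pmf.expectation M g"
proof -
  have "measure_pmf.prob M A = measure_pmf.expectation M (indicator A)" by simp
  also have "\<dots> \<le> measure_pmf.expectation M g"
    by (intro integral_mono_AE integrable_measure_pmf_finite assms AE_pmfI)
       (auto simp: indicator_def assms)
  finally show ?thesis .
qed

lemma num_bound: "exp (4/15::real) + exp (- (4/15) - 1/6) \<le> 2"
proof -
  have a: "exp (4/15::real) \<le> 1 + 4/15 + (4/15)^2" by (rule exp_bound) auto
  have b: "1 + 13/30 + (13/30)^2/2 \<le> exp (13/30::real)" by (rule exp_lower_Taylor_quadratic) auto
  have "exp (- (4/15) - 1/6 :: real) = inverse (exp (13/30))" by (simp flip: exp_minus)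
  also have "\<dots> \<le> inverse (1 + 13/30 + (13/30)^2/2)"
    by (rule le_imp_inverse_le[OF b]) (simp add: power2_eq_square)
  finally show ?thesis using a by (simp add: power2_eq_square)
qed

lemma chern2:
  fixes a1 a2 :: "'a \<Rightarrow> bool" and k :: real
  assumes fin: "finite I" and k: "k \<ge> 0"
  shows "measure_pmf.prob (Pi_pmf I False (\<lambda>_. bernoulli_pmf (1/2)))
     {\<sigma>. (\<Sum>x\<in>I. of_bool (if \<sigma> x then a2 x else a1 x)) \<le> k \<and>
         (\<Sum>x\<in>I. of_bool (if \<sigma> x then a1 x else a2 x)) \<ge> 2*k} \<le> exp (-k/10)"
proof -
  define \<mu> :: real where "\<mu> = 4/15"
  define \<nu> :: real where "\<nu> = 1/6"
  define f :: "'a \<Rightarrow> bool \<Rightarrow> real" where "f x b = of_bool (if b then a2 x else a1 x)" for x b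
  define s :: "'a \<Rightarrow> bool \<Rightarrow> real" where "s x b = of_bool (if b then a1 x else a2 x)" for x b
  define \<phi> where "\<phi> x b = exp (\<mu> * s x b - (\<mu> + \<nu>) * f x b)" for x b
  define g where "g \<sigma> = exp ((\<nu> - \<mu>) * k) * (\<Prod>x\<in>I. \<phi> x (\<sigma> x))" for \<sigma>
  let ?M = "Pi_pmf I False (\<lambda>_. bernoulli_pmf (1/2))"
  have finM: "finite (set_pmf ?M)"
    by (rule finite_subset[OF set_Pi_pmf_subset'[OF fin]]) (auto intro!: finite_PiE_dflt fin)
  have "measure_pmf.prob ?M {\<sigma>. (\<Sum>x\<in>I. f x (\<sigma> x)) \<le> k \<and> (\<Sum>x\<in>I. s x (\<sigma> x)) \<ge> 2*k}
      \<le> measure_pmf.expectation ?M g"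
  proof (rule prob_le_expectation[OF finM])
    fix \<sigma> assume "\<sigma> \<in> {\<sigma>. (\<Sum>x\<in>I. f x (\<sigma> x)) \<le> k \<and> (\<Sum>x\<in>I. s x (\<sigma> x)) \<ge> 2*k}"
    then have F: "(\<Sum>x\<in>I. f x (\<sigma> x)) \<le> k" and S: "(\<Sum>x\<in>I. s x (\<sigma> x)) \<ge> 2*k" by auto
    have "g \<sigma> = exp ((\<nu> - \<mu>) * k + (\<mu> * (\<Sum>x\<in>I. s x (\<sigma> x)) - (\<mu> + \<nu>) * (\<Sum>x\<in>I. f x (\<sigma> x))))"
      unfolding g_def \<phi>_def exp_sum[OF fin, symmetric] exp_add
      by (simp add: sum_subtractf sum_distrib_left)
    also have "\<dots> \<ge> exp 0"
    proof -
      have "\<mu> * (\<Sum>x\<in>I. s x (\<sigma> x)) \<ge> \<mu> * (2*k)" using S by (simp add: \<mu>_def)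
      moreover have "(\<mu> + \<nu>) * (\<Sum>x\<in>I. f x (\<sigma> x)) \<le> (\<mu> + \<nu>) * k" using F by (simp add: \<mu>_def \<nu>_def)
      ultimately show ?thesis by (simp add: algebra_simps \<mu>_def \<nu>_def)
    qed
    finally show "1 \<le> g \<sigma>" by simp
  qed (simp add: g_def \<phi>_def prod_nonneg)
  also have "measure_pmf.expectation ?M g
       = exp ((\<nu> - \<mu>) * k) * (\<Prod>x\<in>I. measure_pmf.expectation (bernoulli_pmf (1/2)) (\<phi> x))"
    unfolding g_def
    by (subst integral_mult_right_zero, subst expectation_prod_Pi_pmf[OF fin])
       (auto simp: \<phi>_def intro!: integrable_measure_pmf_finite)
  also have "\<dots> \<le> exp ((\<nu> - \<mu>) * k) * 1"
  proof (intro mult_left_mono prod_le_1 conjI)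
    fix x assume "x \<in> I"
    have e: "measure_pmf.expectation (bernoulli_pmf (1/2)) (\<phi> x) = (\<phi> x True + \<phi> x False) / 2"
      by simp
    show "0 \<le> measure_pmf.expectation (bernoulli_pmf (1/2)) (\<phi> x)"
      unfolding e by (simp add: \<phi>_def add_nonneg_nonneg)
    have nb: "exp \<mu> + exp (- \<mu> - \<nu>) \<le> 2" using num_bound by (simp add: \<mu>_def \<nu>_def)
    have "\<phi> x True + \<phi> x False \<le> 2"
      using nb by (cases "a1 x"; cases "a2 x") (auto simp: \<phi>_def s_def f_def \<mu>_def \<nu>_def algebra_simps)
    then show "measure_pmf.expectation (bernoulli_pmf (1/2)) (\<phi> x) \<le> 1" unfolding e by simp
  qed simp
  also have "\<dots> = exp (-k/10)" by (simp add: \<mu>_def \<nu>_def algebra_simps)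
  finally show ?thesis by (simp add: f_def s_def)
qed



lemma num_bound2: "exp (4 * (ln 2 - 1) :: real) \<le> 1/2"
proof -
  have b: "1 + 1 + 1^2/2 \<le> exp (1::real)" by (rule exp_lower_Taylor_quadratic) auto
  have "(5/2::real)^4 \<le> exp 1 ^ 4" by (rule power_mono) (use b in auto)
  also have "exp (1::real) ^ 4 = exp 4" by (simp flip: exp_of_nat_mult)
  finally have e4: "exp (4::real) \<ge> 32" by (simp add: power_divide)
  have "exp (4 * (ln 2 - 1) :: real) = exp (4 * ln 2) / exp 4"
    by (simp add: algebra_simps exp_diff)
  also have "exp (4 * ln 2 :: real) = exp (ln 2) ^ 4" using exp_of_nat_mult[of 4 "ln 2::real"] by simp
  also have "\<dots> = 16" by simp
  also have "16 / exp 4 \<le> (16 / 32::real)" by (rule divide_left_mono) (use e4 in auto)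
  finally show ?thesis by simp
qed

lemma chern1:
  fixes D :: "nat \<Rightarrow> ('e::finite) pmf" and err :: "nat \<Rightarrow> 'e \<Rightarrow> bool" and k :: real
  assumes k: "k \<ge> 2" and big: "real m * (\<Sum>i<n. measure_pmf.prob (D i) {e. err i e}) \<ge> 4 * k"
  shows "measure_pmf.prob (Pi_pmf ({..<n}\<times>{..<m}) dflt (\<lambda>x. D (fst x)))
     {F. (\<Sum>x\<in>{..<n}\<times>{..<m}. of_bool (err (fst x) (F x))) < 2*k} \<le> 1/2"
proof -
  define I where "I = {..<n}\<times>{..<m}"
  have fin: "finite I" by (simp add: I_def)
  define p where "p i = measure_pmf.prob (D i) {e. err i e}" for i
  have p01: "p i \<le> 1" "0 \<le> p i" for i by (auto simp: p_def)
  define \<phi> :: "nat\<times>nat \<Rightarrow> 'e \<Rightarrow> real" where "\<phi> x e = exp (- ln 2 * of_bool (err (fst x) e))" for x e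
  define g where "g F = exp (ln 2 * (2*k)) * (\<Prod>x\<in>I. \<phi> x (F x))" for F
  let ?M = "Pi_pmf I dflt (\<lambda>x. D (fst x))"
  have finM: "finite (set_pmf ?M)"
    by (rule finite_subset[OF set_Pi_pmf_subset'[OF fin]]) (auto intro!: finite_PiE_dflt fin)
  have "measure_pmf.prob ?M {F. (\<Sum>x\<in>I. of_bool (err (fst x) (F x))) < 2*k}
      \<le> measure_pmf.expectation ?M g"
  proof (rule prob_le_expectation[OF finM])
    fix F assume "F \<in> {F. (\<Sum>x\<in>I. of_bool (err (fst x) (F x))) < 2*k}"
    then have F: "(\<Sum>x\<in>I. of_bool (err (fst x) (F x))) < 2*k" by auto
    have "g F = exp (ln 2 * (2*k - (\<Sum>x\<in>I. of_bool (err (fst x) (F x)))))"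
      unfolding g_def \<phi>_def exp_sum[OF fin, symmetric] exp_add[symmetric]
      by (simp add: sum_distrib_left algebra_simps sum_negf)
    also have "\<dots> \<ge> exp 0" using F by simp
    finally show "1 \<le> g F" by simp
  qed (simp add: g_def \<phi>_def prod_nonneg)
  also have "measure_pmf.expectation ?M g
       = exp (ln 2 * (2*k)) * (\<Prod>x\<in>I. measure_pmf.expectation (D (fst x)) (\<phi> x))"
    unfolding g_def
    by (subst integral_mult_right_zero, subst expectation_prod_Pi_pmf[OF fin])
       (auto simp: \<phi>_def intro!: integrable_measure_pmf_finite)
  also have "\<dots> = exp (ln 2 * (2*k)) * (\<Prod>x\<in>I. 1 - p (fst x) / 2)"
  proof -
    have "measure_pmf.expectation (D (fst x)) (\<phi> x) = 1 - p (fst x) / 2" for x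
    proof -
      have "\<phi> x = (\<lambda>e. 1 - (1/2) * indicator {e. err (fst x) e} e)"
        by (auto simp: \<phi>_def fun_eq_iff indicator_def exp_minus)
      then show ?thesis
        by (simp add: p_def integral_diff integrable_measure_pmf_finite)
    qed
    then show ?thesis by simp
  qed
  also have "\<dots> \<le> exp (ln 2 * (2*k)) * (\<Prod>x\<in>I. exp (- (p (fst x) / 2)))"
    by (intro mult_left_mono prod_mono conjI)
       (use p01 in \<open>auto simp del: exp_ge_add_one_self intro: order_trans[OF p01(1)]
             intro: order_trans[OF _ exp_ge_add_one_self]\<close>)
  also have "(\<Prod>x\<in>I. exp (- (p (fst x) / 2))) = exp (- (real m * (\<Sum>i<n. p i)) / 2)"
  proof -
    have "(\<Sum>x\<in>I. p (fst x)) = (\<Sum>i<n. \<Sum>j<m. p i)"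
      using sum.cartesian_product[where g="\<lambda>i j. p i" and A="{..<n}" and B="{..<m}"]
      by (simp add: I_def case_prod_unfold)
    also have "\<dots> = real m * (\<Sum>i<n. p i)" by (simp add: sum_distrib_left)
    finally have "(\<Sum>x\<in>I. - (p (fst x) / 2)) = - (real m * (\<Sum>i<n. p i)) / 2"
      by (simp add: sum_negf sum_divide_distrib[symmetric])
    then show ?thesis unfolding exp_sum[OF fin, symmetric] by simp
  qed
  also have "exp (ln 2 * (2*k)) * \<dots> \<le> exp (ln 2 * (2*k)) * exp (-(2*k))"
    using big by (simp add: p_def)
  also have "\<dots> = exp ((2*k) * (ln 2 - 1))" by (simp add: algebra_simps flip: exp_add)
  also have "\<dots> \<le> exp (4 * (ln 2 - 1))"
  proof -
    have "ln 2 - 1 < (0::real)" using ln_2_less_1 by simp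
    then have "(2*k) * (ln 2 - 1) \<le> 4 * (ln 2 - 1)"
      using k by (intro mult_right_mono_neg) auto
    then show ?thesis by simp
  qed
  also have "\<dots> \<le> 1/2" by (rule num_bound2)
  finally show ?thesis by (simp add: I_def)
qed



definition okh :: "('d::finite) hyp set \<Rightarrow> 'd set set \<Rightarrow> nat \<Rightarrow> (nat \<Rightarrow> 'd hyp) \<Rightarrow> bool" where
  "okh C V n h \<longleftrightarrow> (\<forall>i<n. h i \<in> C) \<and> (\<Union>i<n. Rel (h i)) \<in> V"

lemma emp_flat:
  "emp_err n m h (\<lambda>i j. F (i,j)) =
     (\<Sum>x\<in>{..<n}\<times>{..<m}. of_bool (h (fst x) (fst (F x)) \<noteq> snd (F x))) / (real n * real m)"
proof -
  have "(\<Sum>i<n. \<Sum>j<m. if h i (fst (F (i,j))) \<noteq> snd (F (i,j)) then 1 else 0) =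
        (\<Sum>x\<in>{..<n}\<times>{..<m}. (of_bool (h (fst x) (fst (F x)) \<noteq> snd (F x)) :: real))"
    using sum.cartesian_product[where g="\<lambda>i j. (of_bool (h i (fst (F (i,j))) \<noteq> snd (F (i,j))) :: real)"
        and A="{..<n}" and B="{..<m}"]
    by (simp add: case_prod_unfold of_bool_def)
  then show ?thesis unfolding emp_err_def by simp
qed

lemma patterns_sub:
  "patterns C V n m S \<subseteq> {xs. set xs \<subseteq> {ys. set ys \<subseteq> UNIV \<and> length ys = m} \<and> length xs = n}"
  unfolding patterns_def by auto

lemma finite_patterns_set:
  "finite {xs :: bool list list. set xs \<subseteq> {ys. set ys \<subseteq> UNIV \<and> length ys = m} \<and> length xs = n}"
  by (intro finite_lists_length_eq) (simp add: finite_lists_length_eq)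

lemma finite_patterns: "finite (patterns C V n m S)"
  using finite_subset[OF patterns_sub finite_patterns_set] .

lemma card_patterns_le_shatter: "card (patterns C V n m S) \<le> shatter C V n m"
proof -
  let ?L = "{xs :: bool list list. set xs \<subseteq> {ys. set ys \<subseteq> UNIV \<and> length ys = m} \<and> length xs = n}"
  have "{card (patterns C V n m S) | S. True} \<subseteq> {..card ?L}"
    using card_mono[OF finite_patterns_set patterns_sub] by auto
  then have "finite {card (patterns C V n m S) | S. True}" by (rule finite_subset) simp
  then show ?thesis unfolding shatter_def by (intro Max_ge) auto
qed

definition Gset :: "('d::finite) hyp set \<Rightarrow> 'd set set \<Rightarrow> nat \<Rightarrow> nat \<Rightarrow> real
    \<Rightarrow> (nat\<times>nat \<Rightarrow> 'd example \<times> 'd example) set" where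
  "Gset C V n m \<epsilon> = {T. \<exists>h. okh C V n h \<and> emp_err n m h (\<lambda>i j. fst (T (i,j))) \<le> \<epsilon>
       \<and> 2*\<epsilon> \<le> emp_err n m h (\<lambda>i j. snd (T (i,j)))}"

lemma stepC:
  fixes T :: "nat\<times>nat \<Rightarrow> ('d::finite) example \<times> 'd example"
  assumes n: "n > 0" and m: "m > 0" and e: "\<epsilon> > 0"
  shows "measure_pmf.prob (Pi_pmf ({..<n}\<times>{..<m}) False (\<lambda>_. bernoulli_pmf (1/2)))
     {\<sigma>. (\<lambda>x. if \<sigma> x then prod.swap (T x) else T x) \<in> Gset C V n m \<epsilon>}
     \<le> real (shatter C V n (2*m)) * exp (-(real n*real m*\<epsilon>)/10)"
proof -
  define I where "I = {..<n}\<times>{..<m}"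
  have fin: "finite I" by (simp add: I_def)
  define k where "k = real n * real m * \<epsilon>"
  have k0: "k \<ge> 0" using e by (simp add: k_def)
  have nm: "real n * real m > 0" using n m by simp
  define S2 where "S2 i j = (if j < m then fst (fst (T (i,j))) else fst (snd (T (i, j-m))))" for i j
  define Pt where "Pt = patterns C V n (2*m) S2"
  define a1 where "a1 p x = (p!fst x!snd x \<noteq> snd (fst (T x)))" for p :: "bool list list" and x
  define a2 where "a2 p x = (p!fst x!(m + snd x) \<noteq> snd (snd (T x)))" for p :: "bool list list" and x
  define E where "E p = {\<sigma>. (\<Sum>x\<in>I. (of_bool (if \<sigma> x then a2 p x else a1 p x) :: real)) \<le> k \<and>
         (\<Sum>x\<in>I. (of_bool (if \<sigma> x then a1 p x else a2 p x) :: real)) \<ge> 2*k}" for p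
  let ?M = "Pi_pmf I False (\<lambda>_. bernoulli_pmf (1/2))"
  have sub: "{\<sigma>. (\<lambda>x. if \<sigma> x then prod.swap (T x) else T x) \<in> Gset C V n m \<epsilon>} \<subseteq> (\<Union>p\<in>Pt. E p)"
  proof
    fix \<sigma> assume "\<sigma> \<in> {\<sigma>. (\<lambda>x. if \<sigma> x then prod.swap (T x) else T x) \<in> Gset C V n m \<epsilon>}"
    then obtain h where ok: "okh C V n h"
      and e1: "emp_err n m h (\<lambda>i j. fst (if \<sigma> (i,j) then prod.swap (T (i,j)) else T (i,j))) \<le> \<epsilon>"
      and e2: "2*\<epsilon> \<le> emp_err n m h (\<lambda>i j. snd (if \<sigma> (i,j) then prod.swap (T (i,j)) else T (i,j)))"
      unfolding Gset_def by auto
    define p where "p = map (\<lambda>i. map (\<lambda>j. h i (S2 i j)) [0..<2*m]) [0..<n]"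
    have pP: "p \<in> Pt" unfolding Pt_def patterns_def p_def using ok by (auto simp: okh_def)
    have p1: "p!i!j = h i (fst (fst (T (i,j))))" if "(i,j) \<in> I" for i j
      using that by (simp add: p_def I_def S2_def)
    have p2: "p!i!(m+j) = h i (fst (snd (T (i,j))))" if "(i,j) \<in> I" for i j
      using that by (simp add: p_def I_def S2_def)
    have s1: "(\<Sum>x\<in>I. (of_bool (h (fst x) (fst (fst (if \<sigma> x then prod.swap (T x) else T x))) \<noteq> snd (fst (if \<sigma> x then prod.swap (T x) else T x))) :: real))
        = (\<Sum>x\<in>I. of_bool (if \<sigma> x then a2 p x else a1 p x))"
      by (intro sum.cong refl) (auto simp: a1_def a2_def p1 p2)
    have s2: "(\<Sum>x\<in>I. (of_bool (h (fst x) (fst (snd (if \<sigma> x then prod.swap (T x) else T x))) \<noteq> snd (snd (if \<sigma> x then prod.swap (T x) else T x))) :: real))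
        = (\<Sum>x\<in>I. of_bool (if \<sigma> x then a1 p x else a2 p x))"
      by (intro sum.cong refl) (auto simp: a1_def a2_def p1 p2)
    have q1: "emp_err n m h (\<lambda>i j. fst (if \<sigma> (i,j) then prod.swap (T (i,j)) else T (i,j)))
       = (\<Sum>x\<in>I. (of_bool (if \<sigma> x then a2 p x else a1 p x) :: real)) / (real n * real m)"
      unfolding I_def s1[unfolded I_def, symmetric] by (rule emp_flat[where F="\<lambda>x. fst (if \<sigma> x then prod.swap (T x) else T x)"])
    have "(\<Sum>x\<in>I. (of_bool (if \<sigma> x then a2 p x else a1 p x) :: real)) / (real n * real m) \<le> \<epsilon>"
      using e1 unfolding q1 .
    then have c1: "(\<Sum>x\<in>I. (of_bool (if \<sigma> x then a2 p x else a1 p x) :: real)) \<le> k"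
      using nm by (simp add: k_def pos_divide_le_eq mult.commute)
    have q2: "emp_err n m h (\<lambda>i j. snd (if \<sigma> (i,j) then prod.swap (T (i,j)) else T (i,j)))
       = (\<Sum>x\<in>I. (of_bool (if \<sigma> x then a1 p x else a2 p x) :: real)) / (real n * real m)"
      unfolding I_def s2[unfolded I_def, symmetric] by (rule emp_flat[where F="\<lambda>x. snd (if \<sigma> x then prod.swap (T x) else T x)"])
    have "2*\<epsilon> \<le> (\<Sum>x\<in>I. (of_bool (if \<sigma> x then a1 p x else a2 p x) :: real)) / (real n * real m)"
      using e2 unfolding q2 .
    then have c2: "(\<Sum>x\<in>I. (of_bool (if \<sigma> x then a1 p x else a2 p x) :: real)) \<ge> 2*k"
      using nm by (simp add: k_def pos_le_divide_eq algebra_simps)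
    show "\<sigma> \<in> (\<Union>p\<in>Pt. E p)" using pP c1 c2 by (auto simp: E_def)
  qed
  have "measure_pmf.prob ?M {\<sigma>. (\<lambda>x. if \<sigma> x then prod.swap (T x) else T x) \<in> Gset C V n m \<epsilon>}
      \<le> measure_pmf.prob ?M (\<Union>p\<in>Pt. E p)"
    by (rule measure_pmf.finite_measure_mono[OF sub]) simp
  also have "\<dots> \<le> (\<Sum>p\<in>Pt. measure_pmf.prob ?M (E p))"
    by (rule measure_pmf.finite_measure_subadditive_finite) (auto simp: Pt_def finite_patterns)
  also have "\<dots> \<le> (\<Sum>p\<in>Pt. exp (-k/10))"
    by (intro sum_mono) (unfold E_def, rule chern2[OF fin k0])
  also have "\<dots> = real (card Pt) * exp (-k/10)" by simp
  also have "\<dots> \<le> real (shatter C V n (2*m)) * exp (-k/10)"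
    by (intro mult_right_mono) (auto simp: Pt_def card_patterns_le_shatter)
  finally show ?thesis by (simp add: I_def k_def)
qed



lemma finite_set_Pi_pmf_finite:
  fixes p :: "'a \<Rightarrow> ('b::finite) pmf"
  assumes "finite A" shows "finite (set_pmf (Pi_pmf A d p))"
  by (rule finite_subset[OF set_Pi_pmf_subset'[OF assms]]) (auto intro!: finite_PiE_dflt assms)

lemma delta_D_bound:
  fixes C :: "('d::finite) hyp set" and V :: "'d set set" and D :: "nat \<Rightarrow> 'd example pmf"
  assumes e: "\<epsilon> > 0" and k2: "real n * real m * \<epsilon> \<ge> 2"
  shows "delta_gen_D C V n m \<epsilon> D
           \<le> 2 * real (shatter C V n (2 * m)) * exp (- (real n * real m * \<epsilon>) / 10)"
proof -
  define I where "I = {..<n}\<times>{..<m}"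
  have fin: "finite I" by (simp add: I_def)
  define k where "k = real n * real m * \<epsilon>"
  have nm: "real n * real m > 0"
  proof (rule ccontr)
    assume "\<not> real n * real m > 0"
    then have "real n * real m = 0" by (simp add: zero_less_mult_iff)
    then have "real n * real m * \<epsilon> = 0" by simp
    then show False using k2 by linarith
  qed
  then have n: "n > 0" and m: "m > 0" by (auto simp: zero_less_mult_iff)
  define bound where "bound = real (shatter C V n (2 * m)) * exp (- (real n * real m * \<epsilon>) / 10)"
  define P where "P = Pi_pmf I undefined (\<lambda>x. D (fst x))"
  define Q where "Q = Pi_pmf I (undefined, undefined) (\<lambda>x. pair_pmf (D (fst x)) (D (fst x)))"
  define \<Sigma> where "\<Sigma> = Pi_pmf I False (\<lambda>_. bernoulli_pmf (1/2))"
  define B where "B = {F. (\<lambda>i j. F (i,j)) \<in> bad_event C V n m \<epsilon> D}"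
  define G where "G = Gset C V n m \<epsilon>"
  define zip :: "(nat\<times>nat \<Rightarrow> 'd example) \<times> (nat\<times>nat \<Rightarrow> 'd example) \<Rightarrow> _"
    where "zip = (\<lambda>(f,g) x. (f x, g x))"
  have finP: "finite (set_pmf P)" unfolding P_def by (rule finite_set_Pi_pmf_finite[OF fin])
  have finQ: "finite (set_pmf Q)" unfolding Q_def by (rule finite_set_Pi_pmf_finite[OF fin])
  have d1: "delta_gen_D C V n m \<epsilon> D = measure_pmf.prob P B"
    unfolding delta_gen_D_def sample_flat B_def P_def I_def by (simp add: vimage_def)
  have QP: "Q = map_pmf zip (pair_pmf P P)"
    unfolding Q_def P_def zip_def by (rule Pi_pmf_pair[OF fin])
  have half: "1/2 \<le> measure_pmf.prob P {F'. (F,F') \<in> zip -` G}" if "F \<in> B" for F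
  proof -
    from that obtain h where ok: "okh C V n h" and em: "emp_err n m h (\<lambda>i j. F (i,j)) \<le> \<epsilon>"
      and te: "true_err n D h \<ge> 4 * \<epsilon>"
      unfolding B_def bad_event_def okh_def by auto
    define err where "err i e = (h i (fst e) \<noteq> snd e)" for i e
    have sub: "{F'. emp_err n m h (\<lambda>i j. F' (i,j)) \<ge> 2*\<epsilon>} \<subseteq> {F'. (F,F') \<in> zip -` G}"
      using ok em by (auto simp: zip_def G_def Gset_def)
    have eq: "{F'. emp_err n m h (\<lambda>i j. F' (i,j)) \<ge> 2*\<epsilon>} =
       UNIV - {F'. (\<Sum>x\<in>I. of_bool (err (fst x) (F' x))) < 2*k}"
    proof -
      have "emp_err n m h (\<lambda>i j. F' (i,j)) \<ge> 2*\<epsilon> \<longleftrightarrow> \<not> (\<Sum>x\<in>I. of_bool (err (fst x) (F' x))) < 2*k" for F'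
        unfolding emp_flat I_def err_def k_def using nm by (simp add: pos_le_divide_eq mult.commute mult.left_commute not_less)
      then show ?thesis by auto
    qed
    have big: "real m * (\<Sum>i<n. measure_pmf.prob (D i) {e. err i e}) \<ge> 4 * k"
    proof -
      have "(\<Sum>i<n. measure_pmf.prob (D i) {e. err i e}) = real n * true_err n D h"
        using n by (simp add: true_err_def err_def case_prod_unfold)
      then have "(\<Sum>i<n. measure_pmf.prob (D i) {e. err i e}) \<ge> real n * (4*\<epsilon>)"
        using te n by simp
      then have "real m * (\<Sum>i<n. measure_pmf.prob (D i) {e. err i e}) \<ge> real m * (real n * (4*\<epsilon>))"
        by (rule mult_left_mono) simp
      then show ?thesis by (simp add: k_def algebra_simps)
    qed
    have c: "measure_pmf.prob P {F'. (\<Sum>x\<in>I. of_bool (err (fst x) (F' x))) < 2*k} \<le> 1/2"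
      unfolding P_def I_def by (rule chern1) (use k2 big in \<open>auto simp: k_def\<close>)
    have "1/2 \<le> measure_pmf.prob P {F'. emp_err n m h (\<lambda>i j. F' (i,j)) \<ge> 2*\<epsilon>}"
    proof -
      have "measure_pmf.prob P (UNIV - {F'. (\<Sum>x\<in>I. of_bool (err (fst x) (F' x))) < 2*k})
          = 1 - measure_pmf.prob P {F'. (\<Sum>x\<in>I. of_bool (err (fst x) (F' x))) < 2*k}"
        using measure_pmf.prob_compl[of "{F'. (\<Sum>x\<in>I. of_bool (err (fst x) (F' x))) < 2*k}" P] by simp
      then show ?thesis unfolding eq using c by simp
    qed
    also have "\<dots> \<le> measure_pmf.prob P {F'. (F,F') \<in> zip -` G}"
      by (rule measure_pmf.finite_measure_mono[OF sub]) simp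
    finally show ?thesis .
  qed
  have A: "measure_pmf.prob P B \<le> 2 * measure_pmf.prob Q G"
  proof -
    have "measure_pmf.prob P B / 2 = (\<integral>F. (1/2) * indicator B F \<partial>P)" by simp
    also have "\<dots> \<le> (\<integral>F. measure_pmf.prob P {F'. (F,F') \<in> zip -` G} \<partial>P)"
      by (intro integral_mono_AE integrable_measure_pmf_finite finP AE_pmfI)
         (use half in \<open>auto simp: indicator_def vimage_def\<close>)
    also have "\<dots> = measure_pmf.prob Q G"
      unfolding QP measure_map_pmf measure_pair_pmf_iter by simp
    finally show ?thesis by simp
  qed
  have QS: "map_pmf (\<lambda>(T,\<sigma>) x. if \<sigma> x then prod.swap (T x) else T x) (pair_pmf Q \<Sigma>) = Q"
    unfolding Q_def \<Sigma>_def by (rule swap_invariant[OF fin])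
  have "measure_pmf.prob Q G = measure_pmf.prob (pair_pmf Q \<Sigma>)
           ((\<lambda>(T,\<sigma>) x. if \<sigma> x then prod.swap (T x) else T x) -` G)"
    by (subst (1) QS[symmetric]) simp
  also have "\<dots> = (\<integral>T. measure_pmf.prob \<Sigma> {\<sigma>. (\<lambda>x. if \<sigma> x then prod.swap (T x) else T x) \<in> G} \<partial>Q)"
    by (simp add: measure_pair_pmf_iter)
  also have "\<dots> \<le> (\<integral>T. bound \<partial>Q)"
    by (intro integral_mono_AE integrable_measure_pmf_finite finQ AE_pmfI)
       (unfold \<Sigma>_def G_def bound_def I_def, rule stepC[OF n m e])
  also have "\<dots> = bound" by simp
  finally have "measure_pmf.prob Q G \<le> bound" .
  with A d1 show ?thesis by (simp add: bound_def)
qed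

theorem mainTheorem6:
  fixes C :: "('d::finite) hyp set" and V :: "'d set set"
    and n m :: nat and \<epsilon> :: real
  assumes "\<epsilon> > 0" and "real n * real m * \<epsilon> \<ge> 2"
  shows "delta_gen C V n m \<epsilon>
           \<le> 2 * real (shatter C V n (2 * m)) * exp (- (real n * real m * \<epsilon>) / 10)"
  unfolding delta_gen_def
proof (rule cSUP_least)
  show "UNIV \<noteq> {}" by simp
  fix D show "delta_gen_D C V n m \<epsilon> D
           \<le> 2 * real (shatter C V n (2 * m)) * exp (- (real n * real m * \<epsilon>) / 10)"
    by (rule delta_D_bound[OF assms])
qed

end
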